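(* Let $p$ be an odd prime, $\sigma>0$ a real number, and $L\in\mathbb{F}_p^{d\times c}$ a matrix with pairwise distinct columns. Then there exists a $\sigma$-admissible matrix $S\in\mathbb{F}_p^{d\times c'}$ obtained from $L$ by deleting some columns (possibly the empty matrix, with $c'=0$) such that \[ c'\geq \frac{1}{\log_2 p}\left(\log_2 c-\sigma-(\sigma+d)\,H\!\left(\frac{\sigma}{\sigma+d}\right)\right)-1 . \]
   Context: For $x,\xi\in\mathbb{F}_p^{m}$, $\langle x,\xi\rangle$ denotes the integer representative in $(-p/2,p/2]$ of $\sum_t x_t\xi_t\in\mathbb{F}_p$. A matrix $S\in\mathbb{F}_p^{d\times m}$ with rows $r_1,\dots,r_d$ is called $\sigma$-admissible if $\sum_{i=1}^d\langle r_i,\xi\rangle^2>\sigma$ for every nonzero $\xi\in\mathbb{F}_p^m$. $H(q)=-q\log_2 q-(1-q)\log_2(1-q)$ is the binary entropy function. *)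

theory Defs
  imports Complex_Main "HOL-Computational_Algebra.Primes"
begin

text \<open>Elements of F_p are represented by integers in {0..<p}; a d x c matrix over F_p
  by a function M :: nat => nat => int (row index i < d, column index t), with
  entries in {0..<p}. A column-submatrix is given by the set J of kept column indices.\<close>

definition centered_rep :: "int \<Rightarrow> int \<Rightarrow> int" where
  "centered_rep p x = (let r = x mod p in if 2 * r \<le> p then r else r - p)"

definition sigma_admissible :: "int \<Rightarrow> real \<Rightarrow> nat \<Rightarrow> nat set \<Rightarrow> (nat \<Rightarrow> nat \<Rightarrow> int) \<Rightarrow> bool" where
  "sigma_admissible p \<sigma> d J M \<longleftrightarrow>
     (\<forall>\<xi> :: nat \<Rightarrow> int. (\<forall>t\<in>J. \<xi> t \<in> {0..<p}) \<and> (\<exists>t\<in>J. \<xi> t \<noteq> 0) \<longrightarrow>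
        (\<Sum>i<d. real_of_int (centered_rep p (\<Sum>t\<in>J. M i t * \<xi> t)) ^ 2) > \<sigma>)"

definition bin_entropy :: "real \<Rightarrow> real" where
  "bin_entropy q = - q * log 2 q - (1 - q) * log 2 (1 - q)"

end

theory Submission imports Defs "HOL-Library.FuncSet" begin

lemma geo_eq:
  fixes x :: real assumes "x \<noteq> 1"
  shows "(\<Sum>k\<in>{-int m..int m}. x ^ nat \<bar>k\<bar>) = (1 + x - 2 * x ^ (m+1)) / (1 - x)"
proof (induction m)
  case 0
  then show ?case using assms by (simp add: field_simps)
next
  case (Suc m)
  have s: "{-int (Suc m)..int (Suc m)} = insert (-(int m+1)) (insert (int m+1) {-int m..int m})"
    by auto
  have "(\<Sum>k\<in>{-int (Suc m)..int (Suc m)}. x ^ nat \<bar>k\<bar>)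
      = x ^ (m+1) + (x ^ (m+1) + (\<Sum>k\<in>{-int m..int m}. x ^ nat \<bar>k\<bar>))"
    unfolding s by (simp add: nat_add_distrib)
  also have "\<dots> = (1 + x - 2 * x ^ (Suc m+1)) / (1 - x)"
    unfolding Suc.IH using assms by (simp add: field_simps)
  finally show ?case .
qed

lemma geo_bound:
  fixes x :: real assumes "0 \<le> x" "x < 1"
  shows "(\<Sum>k\<in>{-int m..int m}. x ^ nat \<bar>k\<bar>) \<le> (1 + x) / (1 - x)"
  using assms by (simp add: geo_eq divide_right_mono)

lemma count_bound:
  fixes x \<sigma> :: real assumes "0 < x" "x < 1"
  shows "real (card {w \<in> PiE {..<d} (\<lambda>_. {-int m..int m}). real (\<Sum>i<d. nat \<bar>w i\<bar>) \<le> \<sigma>})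
          \<le> x powr (-\<sigma>) * ((1+x)/(1-x))^d"
proof -
  define P where "P = PiE {..<d} (\<lambda>_. {-int m..int m})"
  define W where "W = {w \<in> P. real (\<Sum>i<d. nat \<bar>w i\<bar>) \<le> \<sigma>}"
  have fP: "finite P" unfolding P_def by (simp add: finite_PiE)
  have WP: "W \<subseteq> P" unfolding W_def by auto
  have "real (card W) = (\<Sum>w\<in>W. 1)" by simp
  also have "\<dots> \<le> (\<Sum>w\<in>W. x powr (-\<sigma>) * x ^ (\<Sum>i<d. nat \<bar>w i\<bar>))"
  proof (rule sum_mono)
    fix w assume "w \<in> W"
    then have le: "real (\<Sum>i<d. nat \<bar>w i\<bar>) - \<sigma> \<le> 0" unfolding W_def by auto
    have "x powr (-\<sigma>) * x ^ (\<Sum>i<d. nat \<bar>w i\<bar>) = x powr (real (\<Sum>i<d. nat \<bar>w i\<bar>) - \<sigma>)"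
      using assms by (simp add: powr_realpow[symmetric] powr_add[symmetric])
    also have "\<dots> \<ge> 1" using powr_mono'[OF le, of x] assms by simp
    finally show "1 \<le> x powr (-\<sigma>) * x ^ (\<Sum>i<d. nat \<bar>w i\<bar>)" .
  qed
  also have "\<dots> \<le> (\<Sum>w\<in>P. x powr (-\<sigma>) * x ^ (\<Sum>i<d. nat \<bar>w i\<bar>))"
    by (rule sum_mono2[OF fP WP]) (use assms in auto)
  also have "\<dots> = x powr (-\<sigma>) * (\<Sum>w\<in>P. \<Prod>i<d. x ^ nat \<bar>w i\<bar>)"
    by (simp add: sum_distrib_left power_sum)
  also have "(\<Sum>w\<in>P. \<Prod>i<d. x ^ nat \<bar>w i\<bar>) = (\<Prod>i<d. \<Sum>k\<in>{-int m..int m}. x ^ nat \<bar>k\<bar>)"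
    unfolding P_def by (rule prod_sum_PiE[symmetric]) auto
  also have "\<dots> \<le> (\<Prod>i<d. (1+x)/(1-x))"
    by (rule prod_mono) (use assms geo_bound in \<open>auto intro: sum_nonneg\<close>)
  finally show ?thesis using assms unfolding W_def P_def
    by (simp add: mult_left_mono)
qed


lemma cr_mod: "(p::int) > 0 \<Longrightarrow> centered_rep p x mod p = x mod p"
  unfolding centered_rep_def Let_def by (simp add: mod_diff_right_eq[symmetric])

lemma cr_bounds: "(p::int) > 0 \<Longrightarrow> -p \<le> centered_rep p x \<and> centered_rep p x \<le> p"
proof -
  assume p: "p > 0"
  have "0 \<le> x mod p" "x mod p < p" using p by auto
  then show ?thesis unfolding centered_rep_def Let_def by auto
qed

lemma abs_le_sq: "real (nat \<bar>z::int\<bar>) \<le> real_of_int z ^ 2"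
proof -
  have "\<bar>z\<bar> \<le> z^2"
  proof (cases "z = 0")
    case False
    then have "1 \<le> \<bar>z\<bar>" by linarith
    then have "\<bar>z\<bar> * 1 \<le> \<bar>z\<bar> * \<bar>z\<bar>" by (intro mult_left_mono) auto
    then show ?thesis by (simp add: power2_eq_square abs_mult[symmetric])
  qed simp
  then show ?thesis by (smt (verit) of_int_le_iff of_int_power of_nat_nat)
qed

theorem lemma4p3:
  fixes p :: int and \<sigma> :: real and d c :: nat and L :: "nat \<Rightarrow> nat \<Rightarrow> int"
  assumes "prime p" and "odd p" and "\<sigma> > 0"
    and "\<forall>i<d. \<forall>t<c. L i t \<in> {0..<p}"
    and "\<forall>t<c. \<forall>t'<c. t \<noteq> t' \<longrightarrow> (\<exists>i<d. L i t \<noteq> L i t')"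
  shows "\<exists>J \<subseteq> {..<c}. sigma_admissible p \<sigma> d J L \<and>
           real (card J) \<ge> (log 2 (real c) - \<sigma> - (\<sigma> + real d) * bin_entropy (\<sigma> / (\<sigma> + real d)))
                             / log 2 (real_of_int p) - 1"
proof -
  note Lr = assms(4) and Ld = assms(5)
  have p2: "p \<ge> 2" using assms(1) prime_ge_2_int by blast
  have pp: "p > 0" using p2 by simp
  have p3: "p \<ge> 3" using p2 assms(2) by (cases "p = 2") auto
  define Adm where "Adm = {J. J \<subseteq> {..<c} \<and> sigma_admissible p \<sigma> d J L}"
  have emp: "{} \<in> Adm" unfolding Adm_def sigma_admissible_def by auto
  have fAdm: "finite Adm" unfolding Adm_def by (rule finite_subset[of _ "Pow {..<c}"]) auto
  obtain J where JA: "J \<in> Adm" and Jmax: "\<And>J'. J' \<in> Adm \<Longrightarrow> card J' \<le> card J"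
  proof -
    have "Max (card ` Adm) \<in> card ` Adm" using fAdm emp by (intro Max_in) auto
    then obtain J where "J \<in> Adm" "card J = Max (card ` Adm)" by auto
    then show ?thesis using that fAdm by auto
  qed
  have Jc: "J \<subseteq> {..<c}" and Jadm: "sigma_admissible p \<sigma> d J L" using JA unfolding Adm_def by auto
  have fJ: "finite J" using Jc finite_subset by blast
  define P where "P = (\<lambda>t (\<xi>::nat \<Rightarrow> int). (\<forall>s\<in>insert t J. \<xi> s \<in> {0..<p}) \<and> (\<exists>s\<in>insert t J. \<xi> s \<noteq> 0) \<and>
     \<not> ((\<Sum>i<d. real_of_int (centered_rep p (\<Sum>s\<in>insert t J. L i s * \<xi> s)) ^ 2) > \<sigma>))"
  have ex: "\<forall>t\<in>{..<c}-J. \<exists>\<xi>. P t \<xi>"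
  proof
    fix t assume t: "t \<in> {..<c}-J"
    have "card (insert t J) > card J" using t fJ by simp
    then have "insert t J \<notin> Adm" using Jmax by fastforce
    then have "\<not> sigma_admissible p \<sigma> d (insert t J) L" using t Jc unfolding Adm_def by auto
    then show "\<exists>\<xi>. P t \<xi>" unfolding sigma_admissible_def P_def by blast
  qed
  then obtain f where f: "\<And>t. t \<in> {..<c}-J \<Longrightarrow> P t (f t)" by metis
  have ftt: "f t t \<in> {1..<p}" if t: "t \<in> {..<c}-J" for t
  proof (rule ccontr)
    have P: "P t (f t)" using f t by blast
    assume "f t t \<notin> {1..<p}"
    then have z: "f t t = 0" using P unfolding P_def by auto
    have "\<And>i. (\<Sum>s\<in>insert t J. L i s * f t s) = (\<Sum>s\<in>J. L i s * f t s)"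
      using t fJ z by (simp add: sum.insert)
    moreover have "(\<forall>s\<in>J. f t s \<in> {0..<p}) \<and> (\<exists>s\<in>J. f t s \<noteq> 0)" using P z unfolding P_def by auto
    ultimately show False using Jadm P unfolding sigma_admissible_def P_def by auto
  qed
  define W where "W = {w \<in> PiE {..<d} (\<lambda>_. {-p..p}). (\<Sum>i<d. real_of_int (w i)^2) \<le> \<sigma>}"
  define G where "G = (\<lambda>t. (f t t, (\<lambda>i\<in>{..<d}. centered_rep p (\<Sum>s\<in>insert t J. L i s * f t s)),
      restrict (f t) J))"
  have Gmap: "G ` ({..<c}-J) \<subseteq> {1..<p} \<times> W \<times> PiE J (\<lambda>_. {0..<p})"
  proof (rule image_subsetI)
    fix t assume t: "t \<in> {..<c} - J"
    then have P: "P t (f t)" using f by blast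
    have 1: "f t t \<in> {1..<p}" using ftt t by auto
    have 2: "(\<lambda>i\<in>{..<d}. centered_rep p (\<Sum>s\<in>insert t J. L i s * f t s)) \<in> W"
      using P cr_bounds[of p] p2 unfolding W_def P_def by auto
    have 3: "restrict (f t) J \<in> PiE J (\<lambda>_. {0..<p})" using P unfolding P_def by auto
    show "G t \<in> {1..<p} \<times> W \<times> PiE J (\<lambda>_. {0..<p})" using 1 2 3 unfolding G_def by auto
  qed
  have Ginj: "inj_on G ({..<c}-J)"
  proof (rule inj_onI, rule ccontr)
    fix t t' assume t: "t \<in> {..<c}-J" and t': "t' \<in> {..<c}-J" and eq: "G t = G t'" and ne: "t \<noteq> t'"
    define a where "a = f t t"
    have a: "a \<in> {1..<p}" using ftt t unfolding a_def by blast
    have a': "f t' t' = a" using eq unfolding G_def a_def by simp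
    have rr: "restrict (f t) J = restrict (f t') J" using eq unfolding G_def by simp
    have fs: "f t s = f t' s" if "s \<in> J" for s
    proof -
      have "restrict (f t) J s = restrict (f t') J s" using rr by simp
      then show ?thesis using that by simp
    qed
    have ww: "(\<lambda>i\<in>{..<d}. centered_rep p (\<Sum>s\<in>insert t J. L i s * f t s))
       = (\<lambda>i\<in>{..<d}. centered_rep p (\<Sum>s\<in>insert t' J. L i s * f t' s))"
      using eq unfolding G_def by simp
    have "L i t = L i t'" if i: "i < d" for i
    proof -
      have "centered_rep p (\<Sum>s\<in>insert t J. L i s * f t s) = centered_rep p (\<Sum>s\<in>insert t' J. L i s * f t' s)"
        using fun_cong[OF ww, of i] i by simp
      then have "(\<Sum>s\<in>insert t J. L i s * f t s) mod p = (\<Sum>s\<in>insert t' J. L i s * f t' s) mod p"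
        using cr_mod[OF pp] by metis
      moreover have "(\<Sum>s\<in>insert t J. L i s * f t s) = L i t * a + (\<Sum>s\<in>J. L i s * f t s)"
        using t fJ unfolding a_def by (simp add: sum.insert)
      moreover have "(\<Sum>s\<in>insert t' J. L i s * f t' s) = L i t' * a + (\<Sum>s\<in>J. L i s * f t s)"
        using t' fJ a' fs by (simp add: sum.insert)
      ultimately have "p dvd (L i t - L i t') * a"
        by (simp add: mod_eq_dvd_iff algebra_simps)
      moreover have "\<not> p dvd a" using a zdvd_not_zless by auto
      ultimately have "p dvd (L i t - L i t')" using assms(1) prime_dvd_mult_iff by blast
      moreover have "L i t \<in> {0..<p}" "L i t' \<in> {0..<p}" using Lr i t t' by auto
      ultimately have "L i t mod p = L i t' mod p" by (simp only: mod_eq_dvd_iff)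
      then show ?thesis using \<open>L i t \<in> {0..<p}\<close> \<open>L i t' \<in> {0..<p}\<close>
        by (metis atLeastLessThan_iff mod_pos_pos_trivial)
    qed
    then show False using Ld t t' ne by auto
  qed
  have fW: "finite W" unfolding W_def by (rule finite_subset[of _ "PiE {..<d} (\<lambda>_. {-p..p})"]) (auto simp: finite_PiE)
  have cardT: "card ({1..<p} \<times> W \<times> PiE J (\<lambda>_. {0..<p})) = nat (p-1) * card W * nat p ^ card J"
    using fJ by (simp add: card_cartesian_product card_PiE)
  have c1: "card ({..<c}-J) \<le> nat (p-1) * card W * nat p ^ card J"
  proof -
    have "card ({..<c}-J) = card (G ` ({..<c}-J))" using Ginj by (simp add: card_image)
    also have "\<dots> \<le> card ({1..<p} \<times> W \<times> PiE J (\<lambda>_. {0..<p}))"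
      by (rule card_mono[OF _ Gmap]) (use fW fJ in \<open>auto simp: finite_PiE\<close>)
    finally show ?thesis using cardT by simp
  qed
  have W0: "(\<lambda>i\<in>{..<d}. 0::int) \<in> W" unfolding W_def using assms(3) p2 by auto
  then have W1: "card W \<ge> 1" using fW by (metis card_0_eq empty_iff less_one linorder_not_le)
  have kp: "card J \<le> nat p ^ card J"
  proof -
    have "card J < 2 ^ card J" by (rule less_exp)
    also have "(2::nat) ^ card J \<le> nat p ^ card J" using p2 by (intro power_mono) auto
    finally show ?thesis by simp
  qed
  have cbound: "c \<le> card W * nat p ^ (card J + 1)"
  proof -
    have "card J \<le> c" using card_mono[OF _ Jc] by simp
    then have "c = card J + card ({..<c}-J)" using Jc fJ by (simp add: card_Diff_subset)
    also have "\<dots> \<le> nat p ^ card J + nat (p-1) * card W * nat p ^ card J" using c1 kp by linarith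
    also have "\<dots> \<le> card W * nat p ^ card J + nat (p-1) * card W * nat p ^ card J"
      using W1 by simp
    also have "\<dots> = card W * nat p ^ (card J + 1)"
    proof -
      obtain m where m: "nat p = Suc m" using p2 by (cases "nat p") auto
      have "nat (p-1) = m" using m p2 by linarith
      then show ?thesis using m by (simp add: algebra_simps)
    qed
    finally show ?thesis .
  qed
  define k where "k = card J"
  define Wc where "Wc = card W"
  define q where "q = \<sigma> / (\<sigma> + real d)"
  define x where "x = q / 2"
  have q0: "0 < q" "q \<le> 1" using assms(3) unfolding q_def by auto
  have x0: "0 < x" "x < 1" using q0 unfolding x_def by auto
  define Wcount where "Wcount = {w \<in> PiE {..<d} (\<lambda>_. {-int (nat p)..int (nat p)}). real (\<Sum>i<d. nat \<bar>w i\<bar>) \<le> \<sigma>}"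
  have WWc: "W \<subseteq> Wcount"
  proof
    fix w assume w: "w \<in> W"
    have "real (\<Sum>i<d. nat \<bar>w i\<bar>) = (\<Sum>i<d. real (nat \<bar>w i\<bar>))" by simp
    also have "\<dots> \<le> (\<Sum>i<d. real_of_int (w i)^2)" by (intro sum_mono abs_le_sq)
    also have "\<dots> \<le> \<sigma>" using w unfolding W_def by auto
    finally show "w \<in> Wcount" using w pp unfolding W_def Wcount_def by auto
  qed
  have fWc: "finite Wcount" unfolding Wcount_def
    by (rule finite_subset[of _ "PiE {..<d} (\<lambda>_. {-int (nat p)..int (nat p)})"]) (auto simp: finite_PiE)
  have WcB: "real Wc \<le> x powr (-\<sigma>) * ((1+x)/(1-x))^d"
  proof -
    have "Wc \<le> card Wcount" unfolding Wc_def by (rule card_mono[OF fWc WWc])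
    then have "real Wc \<le> real (card Wcount)" by simp
    also have "\<dots> \<le> x powr (-\<sigma>) * ((1+x)/(1-x))^d" unfolding Wcount_def by (rule count_bound[OF x0])
    finally show ?thesis .
  qed
  have Wc1: "real Wc \<ge> 1" using W1 unfolding Wc_def by simp
  have rpos: "(1+x)/(1-x) > 0" using x0 by auto
  have logWc: "log 2 (real Wc) \<le> \<sigma> - \<sigma> * log 2 q + real d * log 2 ((1+x)/(1-x))"
  proof -
    have "log 2 (real Wc) \<le> log 2 (x powr (-\<sigma>) * ((1+x)/(1-x))^d)"
      using WcB Wc1 by (subst log_le_cancel_iff) auto
    also have "\<dots> = log 2 (x powr (-\<sigma>)) + log 2 (((1+x)/(1-x))^d)"
      using x0 rpos by (simp add: log_mult)
    also have "\<dots> = -\<sigma> * log 2 x + real d * log 2 ((1+x)/(1-x))"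
      using x0 rpos by (simp add: log_powr log_nat_power)
    also have "log 2 x = log 2 q - 1" unfolding x_def using q0 by (simp add: log_divide)
    finally show ?thesis by (simp add: algebra_simps)
  qed
  have dpart: "real d * log 2 ((1+x)/(1-x)) \<le> - real d * log 2 (1 - q)"
  proof (cases "d = 0")
    case False
    then have q1: "q < 1" unfolding q_def using assms(3) by auto
    have "(1+x)/(1-x) \<le> 1/(1-q)" using q0 q1 x0 unfolding x_def
      by (simp add: divide_simps) (simp add: algebra_simps power2_eq_square)
    then have "log 2 ((1+x)/(1-x)) \<le> log 2 (1/(1-q))" using rpos q1 by (subst log_le_cancel_iff) auto
    also have "\<dots> = - log 2 (1-q)" using q1 by (simp add: log_divide)
    finally have "log 2 ((1+x)/(1-x)) \<le> - log 2 (1-q)" .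
    then have "real d * log 2 ((1+x)/(1-x)) \<le> real d * (- log 2 (1-q))" by (intro mult_left_mono) auto
    then show ?thesis by simp
  qed simp
  have Hid: "(\<sigma> + real d) * bin_entropy q = - \<sigma> * log 2 q - real d * log 2 (1 - q)"
  proof -
    have e1: "(\<sigma> + real d) * q = \<sigma>" and e2: "(\<sigma> + real d) * (1 - q) = real d"
      using assms(3) unfolding q_def by (auto simp: field_simps)
    have "(\<sigma> + real d) * bin_entropy q = - ((\<sigma> + real d) * q) * log 2 q - ((\<sigma> + real d) * (1 - q)) * log 2 (1 - q)"
      unfolding bin_entropy_def by (simp add: algebra_simps)
    then show ?thesis using e1 e2 by simp
  qed
  have logW: "log 2 (real Wc) \<le> \<sigma> + (\<sigma> + real d) * bin_entropy q"
    using logWc dpart Hid by linarith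
  have cW: "real c \<le> real Wc * real_of_int p ^ (k + 1)"
  proof -
    have "real c \<le> real (card W * nat p ^ (card J + 1))" using cbound by linarith
    also have "\<dots> = real Wc * real_of_int p ^ (k + 1)" unfolding Wc_def k_def using pp by simp
    finally show ?thesis .
  qed
  have lp: "log 2 (real_of_int p) > 0" using p3 by simp
  have logc: "log 2 (real c) \<le> log 2 (real Wc) + real (k+1) * log 2 (real_of_int p)"
  proof (cases "c = 0")
    case True
    have "log 2 (real Wc) \<ge> 0" using Wc1 by simp
    have l0: "log 2 (0::real) = 0" by (simp add: log_def)
    have "0 \<le> real (k+1) * log 2 (real_of_int p)" using lp by simp
    then show ?thesis using True l0 \<open>log 2 (real Wc) \<ge> 0\<close> by simp
  next
    case False
    have "log 2 (real c) \<le> log 2 (real Wc * real_of_int p ^ (k + 1))"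
      using cW False by (subst log_le_cancel_iff) (use Wc1 pp in auto)
    also have "\<dots> = log 2 (real Wc) + real (k+1) * log 2 (real_of_int p)"
      using Wc1 pp by (simp add: log_mult log_nat_power algebra_simps)
    finally show ?thesis .
  qed
  have "(log 2 (real c) - \<sigma> - (\<sigma> + real d) * bin_entropy q) / log 2 (real_of_int p) \<le> real (k + 1)"
    using logc logW lp by (simp add: divide_le_eq algebra_simps)
  then have "(log 2 (real c) - \<sigma> - (\<sigma> + real d) * bin_entropy q) / log 2 (real_of_int p) - 1 \<le> real k"
    by simp
  then show ?thesis using Jc Jadm unfolding k_def q_def by blast
qed

end
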